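(* Let $G$ be a finite $p$-group and let $\alpha\in Z^2(G,\mathbb{C}^\times)$. Then $G$ has a faithful irreducible $\alpha$-representation if and only if, for every non-trivial central subgroup $N$ of $G$, the class $[\alpha]$ does not lie in the image of the inflation map $\operatorname{inf}:\mathrm{H}^2(G/N,\mathbb{C}^\times)\to\mathrm{H}^2(G,\mathbb{C}^\times)$.
   Context: All groups are finite and all representations are over $\mathbb{C}$. For a cocycle $\alpha\in Z^2(G,\mathbb{C}^\times)$, an $\alpha$-representation of $G$ is a map $\rho:G\to \mathrm{GL}(V)$ ($V$ finite-dimensional) with $\rho(1)=1_V$ and $\rho(g)\rho(h)=\alpha(g,h)\rho(gh)$ for all $g,h$; it is irreducible if $V$ has no proper nonzero $\rho(G)$-invariant subspace. Its (projective) kernel is $\ker\rho=\{g\in G:\rho(g)=\lambda I_V \text{ for some }\lambda\in\mathbb{C}^\times\}$, and $\rho$ is faithful if $\ker\rho=1$. For $N\trianglelefteq G$ the inflation map sends the class of $\beta\in Z^2(G/N,\mathbb{C}^\times)$ to the class of $(x,y)\mapsto\beta(xN,yN)$. *)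

theory Defs
  imports "HOL-Algebra.Coset" "Jordan_Normal_Form.Matrix"
begin

definition p_group :: "nat \<Rightarrow> ('a, 'b) monoid_scheme \<Rightarrow> bool" where
  "p_group p G \<longleftrightarrow> group G \<and> prime p \<and> finite (carrier G) \<and> (\<exists>k. order G = p ^ k)"

definition cocycle2 :: "('a, 'b) monoid_scheme \<Rightarrow> ('a \<Rightarrow> 'a \<Rightarrow> complex) \<Rightarrow> bool" where
  "cocycle2 G \<alpha> \<longleftrightarrow>
     (\<forall>x\<in>carrier G. \<forall>y\<in>carrier G. \<alpha> x y \<noteq> 0) \<and>
     (\<forall>x\<in>carrier G. \<forall>y\<in>carrier G. \<forall>z\<in>carrier G.
        \<alpha> x y * \<alpha> (x \<otimes>\<^bsub>G\<^esub> y) z = \<alpha> x (y \<otimes>\<^bsub>G\<^esub> z) * \<alpha> y z)"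

definition cohomologous :: "('a, 'b) monoid_scheme \<Rightarrow> ('a \<Rightarrow> 'a \<Rightarrow> complex) \<Rightarrow> ('a \<Rightarrow> 'a \<Rightarrow> complex) \<Rightarrow> bool" where
  "cohomologous G \<alpha> \<beta> \<longleftrightarrow>
     (\<exists>\<mu>. (\<forall>x\<in>carrier G. \<mu> x \<noteq> 0) \<and>
          (\<forall>x\<in>carrier G. \<forall>y\<in>carrier G.
             \<alpha> x y = \<mu> x * \<mu> y / \<mu> (x \<otimes>\<^bsub>G\<^esub> y) * \<beta> x y))"

definition inflation :: "('a, 'b) monoid_scheme \<Rightarrow> 'a set \<Rightarrow> ('a set \<Rightarrow> 'a set \<Rightarrow> complex) \<Rightarrow> ('a \<Rightarrow> 'a \<Rightarrow> complex)" where
  "inflation G N \<beta> = (\<lambda>x y. \<beta> (N #>\<^bsub>G\<^esub> x) (N #>\<^bsub>G\<^esub> y))"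

(* [alpha] lies in the image of inf : H^2(G/N) -> H^2(G) *)
definition in_inflation_image :: "('a, 'b) monoid_scheme \<Rightarrow> 'a set \<Rightarrow> ('a \<Rightarrow> 'a \<Rightarrow> complex) \<Rightarrow> bool" where
  "in_inflation_image G N \<alpha> \<longleftrightarrow>
     (\<exists>\<beta>. cocycle2 (G Mod N) \<beta> \<and> cohomologous G \<alpha> (inflation G N \<beta>))"

definition central_subgroup :: "'a set \<Rightarrow> ('a, 'b) monoid_scheme \<Rightarrow> bool" where
  "central_subgroup N G \<longleftrightarrow> subgroup N G \<and>
     (\<forall>n\<in>N. \<forall>g\<in>carrier G. n \<otimes>\<^bsub>G\<^esub> g = g \<otimes>\<^bsub>G\<^esub> n)"

definition alpha_rep :: "('a, 'b) monoid_scheme \<Rightarrow> ('a \<Rightarrow> 'a \<Rightarrow> complex) \<Rightarrow> nat \<Rightarrow> ('a \<Rightarrow> complex mat) \<Rightarrow> bool" where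
  "alpha_rep G \<alpha> n \<rho> \<longleftrightarrow>
     (\<forall>g\<in>carrier G. \<rho> g \<in> carrier_mat n n \<and> invertible_mat (\<rho> g)) \<and>
     \<rho> \<one>\<^bsub>G\<^esub> = 1\<^sub>m n \<and>
     (\<forall>g\<in>carrier G. \<forall>h\<in>carrier G. \<rho> g * \<rho> h = \<alpha> g h \<cdot>\<^sub>m \<rho> (g \<otimes>\<^bsub>G\<^esub> h))"

definition invariant_subspace :: "('a, 'b) monoid_scheme \<Rightarrow> nat \<Rightarrow> ('a \<Rightarrow> complex mat) \<Rightarrow> complex vec set \<Rightarrow> bool" where
  "invariant_subspace G n \<rho> W \<longleftrightarrow>
     W \<subseteq> carrier_vec n \<and> 0\<^sub>v n \<in> W \<and>
     (\<forall>v\<in>W. \<forall>w\<in>W. v + w \<in> W) \<and>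
     (\<forall>c. \<forall>v\<in>W. c \<cdot>\<^sub>v v \<in> W) \<and>
     (\<forall>g\<in>carrier G. \<forall>v\<in>W. \<rho> g *\<^sub>v v \<in> W)"

definition irreducible_rep :: "('a, 'b) monoid_scheme \<Rightarrow> nat \<Rightarrow> ('a \<Rightarrow> complex mat) \<Rightarrow> bool" where
  "irreducible_rep G n \<rho> \<longleftrightarrow> n > 0 \<and>
     (\<forall>W. invariant_subspace G n \<rho> W \<longrightarrow> W = {0\<^sub>v n} \<or> W = carrier_vec n)"

definition proj_kernel :: "('a, 'b) monoid_scheme \<Rightarrow> nat \<Rightarrow> ('a \<Rightarrow> complex mat) \<Rightarrow> 'a set" where
  "proj_kernel G n \<rho> = {g \<in> carrier G. \<exists>c. c \<noteq> 0 \<and> \<rho> g = c \<cdot>\<^sub>m 1\<^sub>m n}"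

definition faithful_rep :: "('a, 'b) monoid_scheme \<Rightarrow> nat \<Rightarrow> ('a \<Rightarrow> complex mat) \<Rightarrow> bool" where
  "faithful_rep G n \<rho> \<longleftrightarrow> proj_kernel G n \<rho> = {\<one>\<^bsub>G\<^esub>}"

end

theory Submission
  imports Defs "HOL-Algebra.Group_Action" "Jordan_Normal_Form.Char_Poly" "Jordan_Normal_Form.Determinant" "HOL-Computational_Algebra.Primes" begin

lemma mat_nonzero_entry:
  fixes A :: "complex mat"
  assumes A: "A \<in> carrier_mat n n" and inv: "invertible_mat A" and n: "0 < n"
  shows "\<exists>i<n. \<exists>j<n. A $$ (i,j) \<noteq> 0"
proof (rule ccontr)
  assume "\<not> ?thesis"
  hence z: "\<And>j. j < n \<Longrightarrow> A $$ (0,j) = 0" using n by auto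
  from inv obtain B where AB: "A * B = 1\<^sub>m (dim_row A)" and BA: "B * A = 1\<^sub>m (dim_row B)"
    unfolding invertible_mat_def inverts_mat_def by auto
  have dA: "dim_row A = n" "dim_col A = n" using A by auto
  have dB: "dim_col B = n" using arg_cong[OF AB, of dim_col] dA by simp
  have dB2: "dim_row B = n" using arg_cong[OF BA, of dim_col] dA by simp
  have "(A * B) $$ (0,0) = 1" using AB n dA by simp
  moreover have "(A * B) $$ (0,0) = (\<Sum>j\<in>{0..<n}. A $$ (0,j) * B $$ (j,0))"
    using n dA dB dB2 by (simp add: scalar_prod_def)
  moreover have "(\<Sum>j\<in>{0..<n}. A $$ (0,j) * B $$ (j,0)) = 0"
    using z by (intro sum.neutral) simp
  ultimately show False by simp
qed
lemma smult_cancel: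
  fixes A :: "complex mat"
  assumes A: "A \<in> carrier_mat n n" and inv: "invertible_mat A" and n: "0 < n"
    and eq: "c \<cdot>\<^sub>m A = d \<cdot>\<^sub>m A"
  shows "c = d"
proof -
  obtain i j where ij: "i < n" "j < n" "A $$ (i,j) \<noteq> 0" using mat_nonzero_entry[OF A inv n] by auto
  have "(c \<cdot>\<^sub>m A) $$ (i,j) = (d \<cdot>\<^sub>m A) $$ (i,j)" using eq by simp
  hence "c * A $$ (i,j) = d * A $$ (i,j)" using A ij by simp
  thus ?thesis using ij by simp
qed

lemma inj_mat_inverse:
  fixes A :: "complex mat"
  assumes A: "A \<in> carrier_mat n n" and inj: "\<And>v. v \<in> carrier_vec n \<Longrightarrow> A *\<^sub>v v = 0\<^sub>v n \<Longrightarrow> v = 0\<^sub>v n"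
  shows "\<exists>B\<in>carrier_mat n n. A * B = 1\<^sub>m n"
proof -
  have "det A \<noteq> 0" using det_0_iff_vec_prod_zero[OF A] inj by auto
  from det_non_zero_imp_unit[OF A this, of "()"]
  show ?thesis unfolding Units_def ring_mat_def by auto
qed

lemma mult_unit_vec_col:
  fixes A :: "complex mat"
  assumes A: "A \<in> carrier_mat n k" and j: "j < k"
  shows "A *\<^sub>v unit_vec k j = col A j"
proof (rule eq_vecI)
  fix i assume i: "i < dim_vec (col A j)"
  have "(A *\<^sub>v unit_vec k j) $ i = (\<Sum>l\<in>{0..<k}. A $$ (i,l) * (if l = j then 1 else 0))"
    using A i j by (simp add: scalar_prod_def unit_vec_def)
  also have "\<dots> = A $$ (i,j)" using j by (simp add: if_distrib[of "\<lambda>x. _ * x"] sum.delta' cong: if_cong)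
  finally show "(A *\<^sub>v unit_vec k j) $ i = col A j $ i" using A i j by simp
qed (use A in simp)

lemma vec_eq_of_minus0:
  fixes x y :: "complex vec"
  assumes "x \<in> carrier_vec k" "y \<in> carrier_vec k" "x - y = 0\<^sub>v k"
  shows "x = y"
proof (rule eq_vecI)
  fix i assume i: "i < dim_vec y"
  have "(x - y) $ i = 0" using assms(3) i assms(2) by (metis carrier_vecD index_zero_vec(1))
  moreover have "(x - y) $ i = x $ i - y $ i" using assms(1,2) i by simp
  ultimately show "x $ i = y $ i" by simp
qed (use assms(1,2) in \<open>simp add: carrier_vecD\<close>)

lemma mat_cancel_left:
  fixes B :: "complex mat"
  assumes B: "B \<in> carrier_mat n k"
    and inj: "\<And>v. v \<in> carrier_vec k \<Longrightarrow> B *\<^sub>v v = 0\<^sub>v n \<Longrightarrow> v = 0\<^sub>v k"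
    and X: "X \<in> carrier_mat k m" and Y: "Y \<in> carrier_mat k m"
    and eq: "B * X = B * Y"
  shows "X = Y"
proof (rule mat_col_eqI)
  fix j assume j: "j < dim_col Y"
  have cx: "col X j \<in> carrier_vec k" and cy: "col Y j \<in> carrier_vec k" using X Y j by auto
  have "col (B * X) j = col (B * Y) j" using eq by simp
  hence "B *\<^sub>v col X j = B *\<^sub>v col Y j" using B X Y j by simp
  hence "B *\<^sub>v (col X j - col Y j) = 0\<^sub>v n"
    using B cx cy by (simp add: mult_minus_distrib_mat_vec)
  hence "col X j - col Y j = 0\<^sub>v k" using cx cy by (intro inj) auto
  thus "col X j = col Y j" using vec_eq_of_minus0 cx cy by blast
qed (use X Y in \<open>simp_all add: carrier_matD\<close>)



lemma smult_smult_mat: "c \<cdot>\<^sub>m (d \<cdot>\<^sub>m (A :: complex mat)) = (c * d) \<cdot>\<^sub>m A"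
  by (rule eq_matI) auto

lemma one_smult_mat': "(1::complex) \<cdot>\<^sub>m A = A"
  by (rule eq_matI) auto

locale coc = group G for G (structure) +
  fixes \<alpha> :: "'a \<Rightarrow> 'a \<Rightarrow> complex"
  assumes coc: "cocycle2 G \<alpha>" and a11: "\<alpha> \<one> \<one> = 1"
begin

lemma alpha_nz: "x \<in> carrier G \<Longrightarrow> y \<in> carrier G \<Longrightarrow> \<alpha> x y \<noteq> 0"
  using coc unfolding cocycle2_def by auto

lemma alpha_assoc: "x \<in> carrier G \<Longrightarrow> y \<in> carrier G \<Longrightarrow> z \<in> carrier G \<Longrightarrow>
  \<alpha> x y * \<alpha> (x \<otimes> y) z = \<alpha> x (y \<otimes> z) * \<alpha> y z"
  using coc unfolding cocycle2_def by auto

lemma alpha_1l: assumes x: "x \<in> carrier G" shows "\<alpha> \<one> x = 1"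
proof -
  have "\<alpha> \<one> \<one> * \<alpha> (\<one> \<otimes> \<one>) x = \<alpha> \<one> (\<one> \<otimes> x) * \<alpha> \<one> x"
    using alpha_assoc[of \<one> \<one> x] x by simp
  hence "\<alpha> \<one> x = \<alpha> \<one> x * \<alpha> \<one> x" using x a11 by simp
  thus ?thesis using alpha_nz[of \<one> x] x by simp
qed

lemma alpha_1r: assumes x: "x \<in> carrier G" shows "\<alpha> x \<one> = 1"
proof -
  have "\<alpha> x \<one> * \<alpha> (x \<otimes> \<one>) \<one> = \<alpha> x (\<one> \<otimes> \<one>) * \<alpha> \<one> \<one>"
    using alpha_assoc[of x \<one> \<one>] x by simp
  hence "\<alpha> x \<one> * \<alpha> x \<one> = \<alpha> x \<one>" using x a11 by simp
  thus ?thesis using alpha_nz[of x \<one>] x by simp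
qed

definition pre_rep :: "nat \<Rightarrow> ('a \<Rightarrow> complex mat) \<Rightarrow> bool" where
  "pre_rep n \<rho> \<longleftrightarrow> (\<forall>g\<in>carrier G. \<rho> g \<in> carrier_mat n n) \<and> \<rho> \<one> = 1\<^sub>m n \<and>
     (\<forall>g\<in>carrier G. \<forall>h\<in>carrier G. \<rho> g * \<rho> h = \<alpha> g h \<cdot>\<^sub>m \<rho> (g \<otimes> h))"

lemma pre_rep_alpha_rep:
  assumes pr: "pre_rep n \<rho>"
  shows "alpha_rep G \<alpha> n \<rho>"
proof -
  have car: "\<And>g. g \<in> carrier G \<Longrightarrow> \<rho> g \<in> carrier_mat n n" and one: "\<rho> \<one> = 1\<^sub>m n"
    and mult: "\<And>g h. g \<in> carrier G \<Longrightarrow> h \<in> carrier G \<Longrightarrow> \<rho> g * \<rho> h = \<alpha> g h \<cdot>\<^sub>m \<rho> (g \<otimes> h)"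
    using pr unfolding pre_rep_def by auto
  have "invertible_mat (\<rho> g)" if g: "g \<in> carrier G" for g
  proof -
    define B where "B = (1 / \<alpha> g (inv g)) \<cdot>\<^sub>m \<rho> (inv g)"
    have gi: "inv g \<in> carrier G" using g by simp
    have Bc: "B \<in> carrier_mat n n" unfolding B_def using car[OF gi] by simp
    have "\<rho> g * B = (1 / \<alpha> g (inv g)) \<cdot>\<^sub>m (\<rho> g * \<rho> (inv g))"
      unfolding B_def using car[OF g] car[OF gi] by (simp add: mult_smult_distrib)
    also have "\<dots> = (1 / \<alpha> g (inv g)) \<cdot>\<^sub>m (\<alpha> g (inv g) \<cdot>\<^sub>m 1\<^sub>m n)"
      using mult[OF g gi] g one by simp
    also have "\<dots> = 1\<^sub>m n" using alpha_nz[OF g gi] by (simp add: smult_smult_mat one_smult_mat')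
    finally have AB: "\<rho> g * B = 1\<^sub>m n" .
    have BA: "B * \<rho> g = 1\<^sub>m n" using mat_mult_left_right_inverse[OF car[OF g] Bc AB] .
    show ?thesis unfolding invertible_mat_def inverts_mat_def
      using AB BA car[OF g] Bc by (intro conjI exI[of _ B]) (auto simp: square_mat.simps)
  qed
  thus ?thesis unfolding alpha_rep_def using car one mult by auto
qed

end


context coc begin

lemma regular_rep:
  assumes fin: "finite (carrier G)"
  shows "\<exists>m \<rho>. 0 < m \<and> pre_rep m \<rho>"
proof -
  define m where "m = card (carrier G)"
  obtain e where e: "bij_betw e {0..<m} (carrier G)"
    using ex_bij_betw_nat_finite[OF fin] unfolding m_def by blast
  have m0: "0 < m" unfolding m_def using fin by (metis card_gt_0_iff empty_iff one_closed)
  have eG: "\<And>i. i < m \<Longrightarrow> e i \<in> carrier G" using e unfolding bij_betw_def by auto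
  have einj: "\<And>i j. i < m \<Longrightarrow> j < m \<Longrightarrow> e i = e j \<longleftrightarrow> i = j"
    using e unfolding bij_betw_def inj_on_def by auto
  have esurj: "\<And>x. x \<in> carrier G \<Longrightarrow> \<exists>i<m. e i = x"
    using e unfolding bij_betw_def by (metis atLeastLessThan_iff imageE)
  define \<rho> where "\<rho> g = mat m m (\<lambda>(i,j). if e i = g \<otimes> e j then \<alpha> g (e j) else 0)" for g
  have car: "\<rho> g \<in> carrier_mat m m" for g unfolding \<rho>_def by simp
  have one: "\<rho> \<one> = 1\<^sub>m m"
  proof (rule eq_matI)
    fix i j assume i: "i < dim_row (1\<^sub>m m)" and j: "j < dim_col (1\<^sub>m m)"
    hence i': "i < m" and j': "j < m" by auto
    show "\<rho> \<one> $$ (i, j) = 1\<^sub>m m $$ (i, j)"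
      unfolding \<rho>_def using i' j' einj[OF i' j'] eG[OF j'] alpha_1l[OF eG[OF j']] by simp
  qed (auto simp: \<rho>_def)
  have mult: "\<rho> g * \<rho> h = \<alpha> g h \<cdot>\<^sub>m \<rho> (g \<otimes> h)" if g: "g \<in> carrier G" and h: "h \<in> carrier G" for g h
  proof (rule eq_matI)
    fix i j assume i: "i < dim_row (\<alpha> g h \<cdot>\<^sub>m \<rho> (g \<otimes> h))" and j: "j < dim_col (\<alpha> g h \<cdot>\<^sub>m \<rho> (g \<otimes> h))"
    hence i': "i < m" and j': "j < m" by (auto simp: \<rho>_def)
    have ej: "e j \<in> carrier G" using eG[OF j'] .
    obtain l0 where l0: "l0 < m" "e l0 = h \<otimes> e j" using esurj[of "h \<otimes> e j"] h ej by auto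
    have "(\<rho> g * \<rho> h) $$ (i,j) = (\<Sum>l\<in>{0..<m}. \<rho> g $$ (i,l) * \<rho> h $$ (l,j))"
      using i' j' by (simp add: \<rho>_def scalar_prod_def)
    also have "\<dots> = (\<Sum>l\<in>{0..<m}. if l = l0 then \<rho> g $$ (i,l0) * \<alpha> h (e j) else 0)"
    proof (rule sum.cong)
      fix l assume l: "l \<in> {0..<m}"
      hence l': "l < m" by simp
      have "\<rho> h $$ (l,j) = (if l = l0 then \<alpha> h (e j) else 0)"
        unfolding \<rho>_def using l' j' einj[OF l' l0(1)] l0(2) by simp
      thus "\<rho> g $$ (i,l) * \<rho> h $$ (l,j) = (if l = l0 then \<rho> g $$ (i,l0) * \<alpha> h (e j) else 0)"
        by simp
    qed simp
    also have "\<dots> = \<rho> g $$ (i,l0) * \<alpha> h (e j)" using l0(1) by simp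
    also have "\<dots> = (if e i = g \<otimes> (h \<otimes> e j) then \<alpha> g (h \<otimes> e j) * \<alpha> h (e j) else 0)"
      unfolding \<rho>_def using i' l0 by simp
    also have "\<dots> = (if e i = (g \<otimes> h) \<otimes> e j then \<alpha> g h * \<alpha> (g \<otimes> h) (e j) else 0)"
      using alpha_assoc[OF g h ej] m_assoc[OF g h ej] by simp
    also have "\<dots> = (\<alpha> g h \<cdot>\<^sub>m \<rho> (g \<otimes> h)) $$ (i,j)"
      unfolding \<rho>_def using i' j' by simp
    finally show "(\<rho> g * \<rho> h) $$ (i,j) = (\<alpha> g h \<cdot>\<^sub>m \<rho> (g \<otimes> h)) $$ (i,j)" .
  qed (auto simp: \<rho>_def)
  have "pre_rep m \<rho>" unfolding pre_rep_def using car one mult by auto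
  thus ?thesis using m0 by blast
qed

end


lemma inj_le:
  fixes B :: "complex mat"
  assumes B: "B \<in> carrier_mat n k"
    and inj: "\<And>v. v \<in> carrier_vec k \<Longrightarrow> B *\<^sub>v v = 0\<^sub>v n \<Longrightarrow> v = 0\<^sub>v k"
  shows "k \<le> n"
proof (rule ccontr)
  assume "\<not> k \<le> n"
  hence nk: "n < k" by simp
  define P where "P = mat k k (\<lambda>(i,j). if i < n then B $$ (i,j) else 0)"
  have P: "P \<in> carrier_mat k k" unfolding P_def by simp
  have Pinj: "v = 0\<^sub>v k" if v: "v \<in> carrier_vec k" and Pv: "P *\<^sub>v v = 0\<^sub>v k" for v
  proof (rule inj[OF v])
    show "B *\<^sub>v v = 0\<^sub>v n"
    proof (rule eq_vecI)
      fix i assume "i < dim_vec (0\<^sub>v n :: complex vec)"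
      hence i: "i < n" by simp
      have "(P *\<^sub>v v) $ i = 0" using Pv i nk by simp
      moreover have "(P *\<^sub>v v) $ i = (B *\<^sub>v v) $ i"
        using i nk B v unfolding P_def by (simp add: scalar_prod_def)
      ultimately show "(B *\<^sub>v v) $ i = 0\<^sub>v n $ i" using i by simp
    qed (use B in simp)
  qed
  obtain Q where Q: "Q \<in> carrier_mat k k" and PQ: "P * Q = 1\<^sub>m k"
    using inj_mat_inverse[OF P] Pinj by blast
  have "(P * Q) $$ (n,n) = 1" using PQ nk by simp
  moreover have "(P * Q) $$ (n,n) = (\<Sum>j\<in>{0..<k}. P $$ (n,j) * Q $$ (j,n))"
    using nk P Q by (simp add: scalar_prod_def)
  moreover have "(\<Sum>j\<in>{0..<k}. P $$ (n,j) * Q $$ (j,n)) = 0"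
    by (intro sum.neutral) (simp add: P_def nk)
  ultimately show False by simp
qed

lemma append_col_mult:
  fixes B :: "complex mat"
  assumes B: "B \<in> carrier_mat n k" and w: "w \<in> carrier_vec n" and x: "x \<in> carrier_vec (Suc k)"
  shows "mat n (Suc k) (\<lambda>(i,j). if j < k then B $$ (i,j) else w $ i) *\<^sub>v x
       = B *\<^sub>v vec k (\<lambda>j. x $ j) + x $ k \<cdot>\<^sub>v w"
proof (rule eq_vecI)
  fix i assume "i < dim_vec (B *\<^sub>v vec k (\<lambda>j. x $ j) + x $ k \<cdot>\<^sub>v w)"
  hence i: "i < n" using B w by simp
  have "(mat n (Suc k) (\<lambda>(i,j). if j < k then B $$ (i,j) else w $ i) *\<^sub>v x) $ i
      = (\<Sum>j\<in>{0..<Suc k}. (if j < k then B $$ (i,j) else w $ i) * x $ j)"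
    using i x by (simp add: scalar_prod_def)
  also have "\<dots> = (\<Sum>j\<in>{0..<k}. B $$ (i,j) * x $ j) + w $ i * x $ k"
    by (simp add: sum.atLeast0_lessThan_Suc)
  also have "\<dots> = (B *\<^sub>v vec k (\<lambda>j. x $ j) + x $ k \<cdot>\<^sub>v w) $ i"
    using i B w by (simp add: scalar_prod_def mult.commute)
  finally show "(mat n (Suc k) (\<lambda>(i,j). if j < k then B $$ (i,j) else w $ i) *\<^sub>v x) $ i
      = (B *\<^sub>v vec k (\<lambda>j. x $ j) + x $ k \<cdot>\<^sub>v w) $ i" .
qed (use B w in simp)



definition good_mat :: "nat \<Rightarrow> complex vec set \<Rightarrow> nat \<Rightarrow> complex mat \<Rightarrow> bool" where
  "good_mat n W k B \<longleftrightarrow> B \<in> carrier_mat n k \<and>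
     (\<forall>x\<in>carrier_vec k. B *\<^sub>v x = 0\<^sub>v n \<longrightarrow> x = 0\<^sub>v k) \<and> (\<forall>x\<in>carrier_vec k. B *\<^sub>v x \<in> W)"

lemma subspace_basis:
  fixes W :: "complex vec set"
  assumes Wsub: "W \<subseteq> carrier_vec n" and W0: "0\<^sub>v n \<in> W"
    and add: "\<And>v w. v \<in> W \<Longrightarrow> w \<in> W \<Longrightarrow> v + w \<in> W"
    and smul: "\<And>c v. v \<in> W \<Longrightarrow> c \<cdot>\<^sub>v v \<in> W"
    and ne: "W \<noteq> {0\<^sub>v n}" and nf: "W \<noteq> carrier_vec n"
  shows "\<exists>k B. 0 < k \<and> k < n \<and> good_mat n W k B \<and> (\<forall>w\<in>W. \<exists>x\<in>carrier_vec k. w = B *\<^sub>v x)"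
proof -
  define S where "S = {k. \<exists>B. good_mat n W k B}"
  have "good_mat n W 0 (0\<^sub>m n 0)"
  proof -
    have z: "(0\<^sub>m n 0 :: complex mat) *\<^sub>v x = 0\<^sub>v n" if "x \<in> carrier_vec 0" for x :: "complex vec"
      by (rule eq_vecI) (use that in \<open>simp_all add: scalar_prod_def\<close>)
    have "x = 0\<^sub>v 0" if "x \<in> carrier_vec 0" for x :: "complex vec"
      by (rule eq_vecI) (use that in simp_all)
    thus ?thesis unfolding good_mat_def using z W0 by auto
  qed
  hence S0: "0 \<in> S" unfolding S_def by auto
  have Sb: "S \<subseteq> {0..n}"
    unfolding S_def good_mat_def using inj_le by auto
  hence Sfin: "finite S" using finite_subset by blast
  define k where "k = Max S"
  have kS: "k \<in> S" unfolding k_def using Sfin S0 Max_in by blast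
  have kmax: "\<And>k'. k' \<in> S \<Longrightarrow> k' \<le> k" unfolding k_def using Sfin by simp
  obtain B where gB: "good_mat n W k B" using kS unfolding S_def by auto
  have B: "B \<in> carrier_mat n k" and Binj: "\<And>x. x \<in> carrier_vec k \<Longrightarrow> B *\<^sub>v x = 0\<^sub>v n \<Longrightarrow> x = 0\<^sub>v k"
    and BW: "\<And>x. x \<in> carrier_vec k \<Longrightarrow> B *\<^sub>v x \<in> W"
    using gB unfolding good_mat_def by auto
  have span: "\<exists>x\<in>carrier_vec k. w = B *\<^sub>v x" if w: "w \<in> W" for w
  proof (rule ccontr)
    assume nsp: "\<not> ?thesis"
    have wc: "w \<in> carrier_vec n" using w Wsub by auto
    define B' where "B' = mat n (Suc k) (\<lambda>(i,j). if j < k then B $$ (i,j) else w $ i)"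
    have B'c: "B' \<in> carrier_mat n (Suc k)" unfolding B'_def by simp
    have eq: "B' *\<^sub>v x = B *\<^sub>v vec k (\<lambda>j. x $ j) + x $ k \<cdot>\<^sub>v w" if "x \<in> carrier_vec (Suc k)" for x :: "complex vec"
      unfolding B'_def using append_col_mult[OF B wc that] .
    have "good_mat n W (Suc k) B'"
      unfolding good_mat_def
    proof (intro conjI ballI impI)
      show "B' \<in> carrier_mat n (Suc k)" by (rule B'c)
    next
      fix x :: "complex vec" assume x: "x \<in> carrier_vec (Suc k)"
      show "B' *\<^sub>v x \<in> W" unfolding eq[OF x] using BW[of "vec k (\<lambda>j. x $ j)"] w
        by (intro add smul) auto
    next
      fix x :: "complex vec" assume x: "x \<in> carrier_vec (Suc k)" and z: "B' *\<^sub>v x = 0\<^sub>v n"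
      define y where "y = vec k (\<lambda>j. x $ j)"
      have yc: "y \<in> carrier_vec k" unfolding y_def by simp
      have z2: "B *\<^sub>v y + x $ k \<cdot>\<^sub>v w = 0\<^sub>v n" using z eq[OF x] unfolding y_def by simp
      have entry: "(B *\<^sub>v y) $ i + x $ k * w $ i = 0" if i: "i < n" for i
      proof -
        have "(B *\<^sub>v y + x $ k \<cdot>\<^sub>v w) $ i = 0" using z2 i by simp
        thus ?thesis using i B wc by simp
      qed
      have xk: "x $ k = 0"
      proof (rule ccontr)
        assume xk: "x $ k \<noteq> 0"
        have "w = B *\<^sub>v ((- 1 / x $ k) \<cdot>\<^sub>v y)"
        proof (rule eq_vecI)
          fix i assume "i < dim_vec (B *\<^sub>v ((- 1 / x $ k) \<cdot>\<^sub>v y))"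
          hence i: "i < n" using B by simp
          have "(B *\<^sub>v ((- 1 / x $ k) \<cdot>\<^sub>v y)) $ i = (- 1 / x $ k) * (B *\<^sub>v y) $ i"
            using B yc i by (simp add: mult_mat_vec)
          also have "\<dots> = w $ i"
          proof -
            have a: "(B *\<^sub>v y) $ i = - (x $ k * w $ i)" using entry[OF i] by (simp add: eq_neg_iff_add_eq_0)
            show ?thesis unfolding a using xk by (simp add: field_simps)
          qed
          finally show "w $ i = (B *\<^sub>v ((- 1 / x $ k) \<cdot>\<^sub>v y)) $ i" by simp
        qed (use B wc in simp)
        moreover have "(- 1 / x $ k) \<cdot>\<^sub>v y \<in> carrier_vec k" using yc by simp
        ultimately show False using nsp by blast
      qed
      have "B *\<^sub>v y = 0\<^sub>v n"
      proof (rule eq_vecI)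
        fix i assume "i < dim_vec (0\<^sub>v n :: complex vec)"
        hence i: "i < n" by simp
        show "(B *\<^sub>v y) $ i = 0\<^sub>v n $ i" using entry[OF i] xk i by simp
      qed (use B in simp)
      hence y0: "y = 0\<^sub>v k" using Binj yc by blast
      show "x = 0\<^sub>v (Suc k)"
      proof (rule eq_vecI)
        fix j assume "j < dim_vec (0\<^sub>v (Suc k) :: complex vec)"
        hence j: "j < Suc k" by simp
        show "x $ j = 0\<^sub>v (Suc k) $ j"
        proof (cases "j < k")
          case True
          have "y $ j = 0" using y0 True by simp
          thus ?thesis using True j unfolding y_def by simp
        next
          case False
          hence "j = k" using j by simp
          thus ?thesis using xk by simp
        qed
      qed (use x in simp)
    qed
    hence "Suc k \<in> S" unfolding S_def by blast
    thus False using kmax by fastforce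
  qed
  have k0: "0 < k"
  proof (rule ccontr)
    assume "\<not> 0 < k"
    hence k: "k = 0" by simp
    have "W \<subseteq> {0\<^sub>v n}"
    proof
      fix w :: "complex vec" assume w: "w \<in> W"
      then obtain x where x: "x \<in> carrier_vec k" "w = B *\<^sub>v x" using span by blast
      have "B *\<^sub>v x = 0\<^sub>v n" by (rule eq_vecI) (use B x k in \<open>simp_all add: scalar_prod_def\<close>)
      thus "w \<in> {0\<^sub>v n}" using x by simp
    qed
    thus False using ne W0 by blast
  qed
  have kn: "k < n"
  proof -
    have "k \<le> n" using kS Sb by auto
    moreover have "k \<noteq> n"
    proof
      assume kn: "k = n"
      obtain C where C: "C \<in> carrier_mat n n" and BC: "B * C = 1\<^sub>m n"
        using inj_mat_inverse[of B n] B Binj kn by blast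
      have "carrier_vec n \<subseteq> W"
      proof
        fix v :: "complex vec" assume v: "v \<in> carrier_vec n"
        have "B *\<^sub>v (C *\<^sub>v v) = (B * C) *\<^sub>v v" using B C v kn by simp
        also have "\<dots> = v" using BC v by simp
        finally show "v \<in> W" using BW[of "C *\<^sub>v v"] C v kn by simp
      qed
      thus False using nf Wsub by blast
    qed
    ultimately show ?thesis by simp
  qed
  show ?thesis using k0 kn gB span by blast
qed



context coc begin

lemma subrep:
  assumes pr: "pre_rep n \<rho>"
    and inv: "\<And>g v. g \<in> carrier G \<Longrightarrow> v \<in> W \<Longrightarrow> \<rho> g *\<^sub>v v \<in> W"
    and gB: "good_mat n W k B"
    and span: "\<And>w. w \<in> W \<Longrightarrow> \<exists>x\<in>carrier_vec k. w = B *\<^sub>v x"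
  shows "\<exists>\<sigma>. pre_rep k \<sigma>"
proof -
  have car: "\<And>g. g \<in> carrier G \<Longrightarrow> \<rho> g \<in> carrier_mat n n" and one: "\<rho> \<one> = 1\<^sub>m n"
    and mult: "\<And>g h. g \<in> carrier G \<Longrightarrow> h \<in> carrier G \<Longrightarrow> \<rho> g * \<rho> h = \<alpha> g h \<cdot>\<^sub>m \<rho> (g \<otimes> h)"
    using pr unfolding pre_rep_def by auto
  have B: "B \<in> carrier_mat n k" and Binj: "\<And>x. x \<in> carrier_vec k \<Longrightarrow> B *\<^sub>v x = 0\<^sub>v n \<Longrightarrow> x = 0\<^sub>v k"
    and BW: "\<And>x. x \<in> carrier_vec k \<Longrightarrow> B *\<^sub>v x \<in> W"
    using gB unfolding good_mat_def by auto
  define cf where "cf g j = (SOME c. c \<in> carrier_vec k \<and> \<rho> g *\<^sub>v col B j = B *\<^sub>v c)" for g j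
  have cf: "cf g j \<in> carrier_vec k \<and> \<rho> g *\<^sub>v col B j = B *\<^sub>v cf g j" if g: "g \<in> carrier G" and j: "j < k" for g j
  proof -
    have "col B j \<in> W" using BW[of "unit_vec k j"] mult_unit_vec_col[OF B j] by simp
    hence "\<rho> g *\<^sub>v col B j \<in> W" using inv g by blast
    then obtain c where "c \<in> carrier_vec k" "\<rho> g *\<^sub>v col B j = B *\<^sub>v c" using span by metis
    thus ?thesis unfolding cf_def by (rule someI[of "\<lambda>c. c \<in> carrier_vec k \<and> \<rho> g *\<^sub>v col B j = B *\<^sub>v c", OF conjI])
  qed
  define \<sigma> where "\<sigma> g = mat k k (\<lambda>(i,j). cf g j $ i)" for g
  have sc: "\<sigma> g \<in> carrier_mat k k" for g unfolding \<sigma>_def by simp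
  have key: "B * \<sigma> g = \<rho> g * B" if g: "g \<in> carrier G" for g
  proof (rule mat_col_eqI)
    fix j assume "j < dim_col (\<rho> g * B)"
    hence j: "j < k" using B by simp
    have "col (\<sigma> g) j = cf g j"
      by (rule eq_vecI) (use cf[OF g j] j in \<open>auto simp: \<sigma>_def\<close>)
    hence "col (B * \<sigma> g) j = B *\<^sub>v cf g j" using col_mult2[OF B sc[of g] j] by simp
    also have "\<dots> = \<rho> g *\<^sub>v col B j" using cf[OF g j] by simp
    also have "\<dots> = col (\<rho> g * B) j" using col_mult2[OF car[OF g] B j] by simp
    finally show "col (B * \<sigma> g) j = col (\<rho> g * B) j" .
  qed (use B car[OF g] sc in auto)
  have s1: "\<sigma> \<one> = 1\<^sub>m k"
  proof (rule mat_cancel_left[OF B Binj sc])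
    show "1\<^sub>m k \<in> carrier_mat k k" by simp
    show "B * \<sigma> \<one> = B * 1\<^sub>m k" using key[of \<one>] one B by simp
  qed
  have smult: "\<sigma> g * \<sigma> h = \<alpha> g h \<cdot>\<^sub>m \<sigma> (g \<otimes> h)" if g: "g \<in> carrier G" and h: "h \<in> carrier G" for g h
  proof (rule mat_cancel_left[OF B Binj])
    show "\<sigma> g * \<sigma> h \<in> carrier_mat k k" using sc by (meson mult_carrier_mat)
    show "\<alpha> g h \<cdot>\<^sub>m \<sigma> (g \<otimes> h) \<in> carrier_mat k k" using sc by simp
    have gh: "g \<otimes> h \<in> carrier G" using g h by simp
    have "B * (\<sigma> g * \<sigma> h) = (B * \<sigma> g) * \<sigma> h" using B sc by (metis assoc_mult_mat)
    also have "\<dots> = (\<rho> g * B) * \<sigma> h" using key[OF g] by simp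
    also have "\<dots> = \<rho> g * (B * \<sigma> h)" using B sc car[OF g] by (metis assoc_mult_mat)
    also have "\<dots> = \<rho> g * (\<rho> h * B)" using key[OF h] by simp
    also have "\<dots> = (\<rho> g * \<rho> h) * B" using B car[OF g] car[OF h] by (metis assoc_mult_mat)
    also have "\<dots> = (\<alpha> g h \<cdot>\<^sub>m \<rho> (g \<otimes> h)) * B" using mult[OF g h] by simp
    also have "\<dots> = \<alpha> g h \<cdot>\<^sub>m (\<rho> (g \<otimes> h) * B)" using B car[OF gh] by (metis mult_smult_assoc_mat)
    also have "\<dots> = \<alpha> g h \<cdot>\<^sub>m (B * \<sigma> (g \<otimes> h))" using key[OF gh] by simp
    also have "\<dots> = B * (\<alpha> g h \<cdot>\<^sub>m \<sigma> (g \<otimes> h))" using B sc by (metis mult_smult_distrib)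
    finally show "B * (\<sigma> g * \<sigma> h) = B * (\<alpha> g h \<cdot>\<^sub>m \<sigma> (g \<otimes> h))" .
  qed
  have "pre_rep k \<sigma>" unfolding pre_rep_def using sc s1 smult by auto
  thus ?thesis by blast
qed

end


context coc begin

lemma exists_irred:
  assumes fin: "finite (carrier G)"
  shows "\<exists>n \<rho>. alpha_rep G \<alpha> n \<rho> \<and> irreducible_rep G n \<rho>"
proof -
  define P where "P n = (0 < n \<and> (\<exists>\<rho>. pre_rep n \<rho>))" for n
  have ex: "\<exists>n. P n" using regular_rep[OF fin] unfolding P_def by blast
  define n0 where "n0 = (LEAST n. P n)"
  have Pn0: "P n0" unfolding n0_def using ex by (metis LeastI)
  have minim: "\<And>k. P k \<Longrightarrow> n0 \<le> k" unfolding n0_def by (rule Least_le)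
  obtain \<rho> where pr: "pre_rep n0 \<rho>" and n0: "0 < n0" using Pn0 unfolding P_def by blast
  have "irreducible_rep G n0 \<rho>"
    unfolding irreducible_rep_def
  proof (intro conjI allI impI n0)
    fix W assume W: "invariant_subspace G n0 \<rho> W"
    show "W = {0\<^sub>v n0} \<or> W = carrier_vec n0"
    proof (rule ccontr)
      assume nt: "\<not> (W = {0\<^sub>v n0} \<or> W = carrier_vec n0)"
      have Wsub: "W \<subseteq> carrier_vec n0" and W0: "0\<^sub>v n0 \<in> W"
        and add: "\<And>v w. v \<in> W \<Longrightarrow> w \<in> W \<Longrightarrow> v + w \<in> W"
        and smul: "\<And>c v. v \<in> W \<Longrightarrow> c \<cdot>\<^sub>v v \<in> W"
        and inv: "\<And>g v. g \<in> carrier G \<Longrightarrow> v \<in> W \<Longrightarrow> \<rho> g *\<^sub>v v \<in> W"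
        using W unfolding invariant_subspace_def by auto
      obtain k B where k: "0 < k" "k < n0" and gB: "good_mat n0 W k B"
        and span: "\<And>w. w \<in> W \<Longrightarrow> \<exists>x\<in>carrier_vec k. w = B *\<^sub>v x"
        using subspace_basis[OF Wsub W0 add smul] nt by blast
      obtain \<sigma> where "pre_rep k \<sigma>" using subrep[OF pr inv gB span] by blast
      hence "P k" using k unfolding P_def by blast
      thus False using minim k by fastforce
    qed
  qed
  thus ?thesis using pre_rep_alpha_rep[OF pr] by blast
qed

end


lemma (in group) normal_meets_center:
  assumes fin: "finite (carrier G)" and ord: "Coset.order G = p ^ e" and p: "Factorial_Ring.prime (p::nat)"
    and K: "subgroup K G" and conj: "\<And>g x. g \<in> carrier G \<Longrightarrow> x \<in> K \<Longrightarrow> g \<otimes> x \<otimes> inv g \<in> K"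
    and nt: "K \<noteq> {\<one>}"
  shows "\<exists>z\<in>K. z \<noteq> \<one> \<and> (\<forall>g\<in>carrier G. z \<otimes> g = g \<otimes> z)"
proof -
  define \<phi> where "\<phi> = (\<lambda>g. (\<lambda>h \<in> carrier G. g \<otimes> h \<otimes> (inv g)))"
  interpret ga: group_action G "carrier G" \<phi> unfolding \<phi>_def by (rule action_by_conjugation)
  have KG: "K \<subseteq> carrier G" using K subgroup.subset by blast
  have Kfin: "finite K" using KG fin finite_subset by blast
  define Z where "Z = {x\<in>K. \<forall>g\<in>carrier G. x \<otimes> g = g \<otimes> x}"
  have ZK: "Z \<subseteq> K" unfolding Z_def by auto
  have orb: "orbit G \<phi> x = {g \<otimes> x \<otimes> inv g | g. g \<in> carrier G}" if x: "x \<in> carrier G" for x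
    unfolding orbit_def \<phi>_def using x by auto
  have cent_conj: "g \<otimes> x \<otimes> inv g = x \<longleftrightarrow> x \<otimes> g = g \<otimes> x" if "g \<in> carrier G" "x \<in> carrier G" for g x
    using that by (metis inv_closed inv_solve_right m_closed)
  have orb_sub: "orbit G \<phi> x \<subseteq> K - Z" if x: "x \<in> K - Z" for x
  proof
    fix y assume "y \<in> orbit G \<phi> x"
    then obtain g where g: "g \<in> carrier G" and y: "y = g \<otimes> x \<otimes> inv g" using orb[of x] x KG by auto
    have xG: "x \<in> carrier G" using x KG by auto
    have yK: "y \<in> K" using conj[OF g] x y by auto
    have "y \<notin> Z"
    proof
      assume yZ: "y \<in> Z"
      have yG: "y \<in> carrier G" using yK KG by auto
      have yc: "\<And>h. h \<in> carrier G \<Longrightarrow> y \<otimes> h = h \<otimes> y" using yZ unfolding Z_def by auto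
      have "y \<otimes> g = g \<otimes> x \<otimes> inv g \<otimes> g" using y by simp
      also have "\<dots> = g \<otimes> x" using g xG by (simp add: m_assoc)
      finally have "g \<otimes> y = g \<otimes> x" using yc[OF g] by simp
      hence "y = x" using g yG xG by simp
      hence "\<forall>h\<in>carrier G. x \<otimes> h = h \<otimes> x" using yc by simp
      thus False using x unfolding Z_def by auto
    qed
    thus "y \<in> K - Z" using yK by simp
  qed
  have orb_dvd: "p dvd card (orbit G \<phi> x)" if x: "x \<in> K - Z" for x
  proof -
    have xG: "x \<in> carrier G" using x KG by auto
    have "card (orbit G \<phi> x) dvd p ^ e"
      using ga.orbit_stabilizer_theorem[OF xG] ord by (metis dvd_triv_left)
    then obtain j where j: "card (orbit G \<phi> x) = p ^ j" using divides_primepow_nat[OF p] by auto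
    show ?thesis
    proof (cases j)
      case 0
      hence c1: "card (orbit G \<phi> x) = 1" using j by simp
      have "x \<in> orbit G \<phi> x" using ga.orbit_refl[OF xG] .
      hence os: "orbit G \<phi> x = {x}" using c1 by (metis card_1_singletonE singletonD)
      have "\<forall>g\<in>carrier G. x \<otimes> g = g \<otimes> x"
      proof
        fix g assume g: "g \<in> carrier G"
        have "g \<otimes> x \<otimes> inv g \<in> orbit G \<phi> x" using orb[OF xG] g by auto
        hence "g \<otimes> x \<otimes> inv g = x" using os by simp
        thus "x \<otimes> g = g \<otimes> x" using cent_conj[OF g xG] by simp
      qed
      thus ?thesis using x unfolding Z_def by auto
    next
      case (Suc j')
      thus ?thesis using j by simp
    qed
  qed
  have orb_eq: "orbit G \<phi> y = orbit G \<phi> x" if x: "x \<in> carrier G" and y: "y \<in> orbit G \<phi> x" for x y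
  proof -
    have yG: "y \<in> carrier G" using y orb[OF x] x by auto
    show ?thesis
    proof
      show "orbit G \<phi> y \<subseteq> orbit G \<phi> x"
      proof
        fix z assume z: "z \<in> orbit G \<phi> y"
        have zG: "z \<in> carrier G" using z orb[OF yG] yG by auto
        show "z \<in> orbit G \<phi> x" using ga.orbit_trans[OF x yG zG y z] .
      qed
    next
      show "orbit G \<phi> x \<subseteq> orbit G \<phi> y"
      proof
        fix z assume z: "z \<in> orbit G \<phi> x"
        have zG: "z \<in> carrier G" using z orb[OF x] x by auto
        have "x \<in> orbit G \<phi> y" using ga.orbit_sym[OF x yG y] .
        thus "z \<in> orbit G \<phi> y" using ga.orbit_trans[OF yG x zG _ z] by blast
      qed
    qed
  qed
  define Orbs where "Orbs = (\<lambda>x. orbit G \<phi> x) ` (K - Z)"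
  have UOrbs: "\<Union> Orbs = K - Z"
  proof
    show "\<Union> Orbs \<subseteq> K - Z" unfolding Orbs_def using orb_sub by blast
    show "K - Z \<subseteq> \<Union> Orbs" unfolding Orbs_def using ga.orbit_refl KG by blast
  qed
  have Ofin: "finite Orbs" unfolding Orbs_def using Kfin by simp
  have Oelfin: "\<And>A. A \<in> Orbs \<Longrightarrow> finite A" using UOrbs Kfin by (metis Union_upper finite_Diff finite_subset)
  have Odisj: "pairwise disjnt Orbs"
    unfolding pairwise_def disjnt_def Orbs_def
  proof (clarify)
    fix x y assume x: "x \<in> K" "x \<notin> Z" and y: "y \<in> K" "y \<notin> Z" and ne: "orbit G \<phi> x \<noteq> orbit G \<phi> y"
    show "orbit G \<phi> x \<inter> orbit G \<phi> y = {}"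
    proof (rule ccontr)
      assume "orbit G \<phi> x \<inter> orbit G \<phi> y \<noteq> {}"
      then obtain z where z: "z \<in> orbit G \<phi> x" "z \<in> orbit G \<phi> y" by blast
      have "orbit G \<phi> z = orbit G \<phi> x" using orb_eq z(1) x KG by blast
      moreover have "orbit G \<phi> z = orbit G \<phi> y" using orb_eq z(2) y KG by blast
      ultimately show False using ne by simp
    qed
  qed
  have "card (K - Z) = sum card Orbs" using card_Union_disjoint[OF Odisj Oelfin] UOrbs by simp
  hence pKZ: "p dvd card (K - Z)" unfolding Orbs_def using orb_dvd by (metis (no_types, lifting) dvd_sum imageE)
  have "card K dvd p ^ e"
    using lagrange[OF K] ord by (metis dvd_triv_right)
  then obtain j where j: "card K = p ^ j" using divides_primepow_nat[OF p] by auto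
  have oneK: "\<one> \<in> K" using K subgroup.one_closed by blast
  have "card K \<noteq> 1"
  proof
    assume "card K = 1"
    then obtain a where "K = {a}" using card_1_singletonE by blast
    thus False using nt oneK by simp
  qed
  hence "j \<noteq> 0" using j by auto
  hence pK: "p dvd card K" using j by (simp add: dvd_power)
  have "card K = card Z + card (K - Z)"
    using card_Diff_subset[OF finite_subset[OF ZK Kfin] ZK] card_mono[OF Kfin ZK] by simp
  hence pZ: "p dvd card Z" using pK pKZ by (metis dvd_add_left_iff add.commute)
  have oneZ: "\<one> \<in> Z" unfolding Z_def using oneK by auto
  have Zfin: "finite Z" using finite_subset[OF ZK Kfin] .
  have "card Z \<noteq> 0" using oneZ Zfin by auto
  hence "card Z \<ge> p" using pZ by (simp add: dvd_imp_le)
  hence "card Z \<ge> 2" using prime_ge_2_nat[OF p] by simp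
  hence "\<exists>z\<in>Z. z \<noteq> \<one>"
  proof -
    assume c: "card Z \<ge> 2"
    show ?thesis
    proof (rule ccontr)
      assume "\<not> ?thesis"
      hence "Z \<subseteq> {\<one>}" by auto
      hence "card Z \<le> 1" using card_mono[of "{\<one>}" Z] by simp
      thus False using c by simp
    qed
  qed
  thus ?thesis unfolding Z_def by auto
qed



lemma smult_one_mult: "(A :: complex mat) \<in> carrier_mat n k \<Longrightarrow> (c \<cdot>\<^sub>m 1\<^sub>m n) * A = c \<cdot>\<^sub>m A"
  by (metis left_mult_one_mat mult_smult_assoc_mat one_carrier_mat)

lemma mult_smult_one: "(A :: complex mat) \<in> carrier_mat k n \<Longrightarrow> A * (c \<cdot>\<^sub>m 1\<^sub>m n) = c \<cdot>\<^sub>m A"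
  by (metis right_mult_one_mat mult_smult_distrib one_carrier_mat)

lemma smult_mult_smult: "(A :: complex mat) \<in> carrier_mat nr n \<Longrightarrow> B \<in> carrier_mat n nc \<Longrightarrow>
   (a \<cdot>\<^sub>m A) * (b \<cdot>\<^sub>m B) = (a * b) \<cdot>\<^sub>m (A * B)"
proof -
  assume A: "A \<in> carrier_mat nr n" and B: "B \<in> carrier_mat n nc"
  have "(a \<cdot>\<^sub>m A) * (b \<cdot>\<^sub>m B) = a \<cdot>\<^sub>m (A * (b \<cdot>\<^sub>m B))"
    by (rule mult_smult_assoc_mat) (use A B in auto)
  also have "A * (b \<cdot>\<^sub>m B) = b \<cdot>\<^sub>m (A * B)" by (rule mult_smult_distrib[OF A B])
  finally show ?thesis by (simp add: smult_smult_mat)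
qed

locale crep = coc +
  fixes n :: nat and \<rho> :: "'a \<Rightarrow> complex mat"
  assumes rep: "alpha_rep G \<alpha> n \<rho>" and npos: "0 < n"
begin

lemma car: "g \<in> carrier G \<Longrightarrow> \<rho> g \<in> carrier_mat n n"
  using rep unfolding alpha_rep_def by auto
lemma invt: "g \<in> carrier G \<Longrightarrow> invertible_mat (\<rho> g)"
  using rep unfolding alpha_rep_def by auto
lemma rone: "\<rho> \<one> = 1\<^sub>m n"
  using rep unfolding alpha_rep_def by auto
lemma rmult: "g \<in> carrier G \<Longrightarrow> h \<in> carrier G \<Longrightarrow> \<rho> g * \<rho> h = \<alpha> g h \<cdot>\<^sub>m \<rho> (g \<otimes> h)"
  using rep unfolding alpha_rep_def by auto

lemma rprod: assumes "x \<in> carrier G" "y \<in> carrier G"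
  shows "\<rho> (x \<otimes> y) = (1 / \<alpha> x y) \<cdot>\<^sub>m (\<rho> x * \<rho> y)"
  using rmult[OF assms] alpha_nz[OF assms] by (simp add: smult_smult_mat one_smult_mat')

lemma rcancel: "g \<in> carrier G \<Longrightarrow> c \<cdot>\<^sub>m \<rho> g = d \<cdot>\<^sub>m \<rho> g \<Longrightarrow> c = d"
  using smult_cancel[OF car invt npos] by blast

abbreviation K where "K \<equiv> proj_kernel G n \<rho>"

lemma K_iff: "a \<in> K \<longleftrightarrow> a \<in> carrier G \<and> (\<exists>c. c \<noteq> 0 \<and> \<rho> a = c \<cdot>\<^sub>m 1\<^sub>m n)"
  unfolding proj_kernel_def by simp

lemma K_subgroup: "subgroup K G"
proof (rule subgroupI)
  show "K \<subseteq> carrier G" using K_iff by auto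
  have "\<one> \<in> K" unfolding K_iff using rone by (auto intro!: exI[of _ 1] simp: one_smult_mat')
  thus "K \<noteq> {}" by auto
next
  fix a assume a: "a \<in> K"
  then obtain c where aG: "a \<in> carrier G" and c: "c \<noteq> 0" "\<rho> a = c \<cdot>\<^sub>m 1\<^sub>m n" using K_iff by auto
  have ia: "inv a \<in> carrier G" using aG by simp
  have "c \<cdot>\<^sub>m \<rho> (inv a) = \<rho> a * \<rho> (inv a)" using c(2) smult_one_mult[OF car[OF ia]] by simp
  also have "\<dots> = \<alpha> a (inv a) \<cdot>\<^sub>m 1\<^sub>m n" using rmult[OF aG ia] aG rone by simp
  finally have "(1/c) \<cdot>\<^sub>m (c \<cdot>\<^sub>m \<rho> (inv a)) = (1/c) \<cdot>\<^sub>m (\<alpha> a (inv a) \<cdot>\<^sub>m 1\<^sub>m n)" by simp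
  hence "\<rho> (inv a) = (\<alpha> a (inv a) / c) \<cdot>\<^sub>m 1\<^sub>m n" using c(1) by (simp add: smult_smult_mat one_smult_mat')
  moreover have "\<alpha> a (inv a) / c \<noteq> 0" using alpha_nz[OF aG ia] c(1) by simp
  ultimately show "inv a \<in> K" unfolding K_iff using ia by blast
next
  fix a b assume a: "a \<in> K" and b: "b \<in> K"
  obtain c where aG: "a \<in> carrier G" and c: "c \<noteq> 0" "\<rho> a = c \<cdot>\<^sub>m 1\<^sub>m n" using a K_iff by auto
  obtain d where bG: "b \<in> carrier G" and d: "d \<noteq> 0" "\<rho> b = d \<cdot>\<^sub>m 1\<^sub>m n" using b K_iff by auto
  have "\<rho> (a \<otimes> b) = (1 / \<alpha> a b) \<cdot>\<^sub>m ((c * d) \<cdot>\<^sub>m (1\<^sub>m n * 1\<^sub>m n))"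
    using rprod[OF aG bG] c d smult_mult_smult[of "1\<^sub>m n" n n "1\<^sub>m n" n c d] by simp
  also have "\<dots> = (c * d / \<alpha> a b) \<cdot>\<^sub>m 1\<^sub>m n" by (simp add: smult_smult_mat)
  finally have "\<rho> (a \<otimes> b) = (c * d / \<alpha> a b) \<cdot>\<^sub>m 1\<^sub>m n" .
  moreover have "c * d / \<alpha> a b \<noteq> 0" using alpha_nz[OF aG bG] c(1) d(1) by simp
  ultimately show "a \<otimes> b \<in> K" unfolding K_iff using aG bG by blast
qed

lemma K_conj: assumes g: "g \<in> carrier G" and a: "a \<in> K" shows "g \<otimes> a \<otimes> inv g \<in> K"
proof -
  obtain c where aG: "a \<in> carrier G" and c: "c \<noteq> 0" "\<rho> a = c \<cdot>\<^sub>m 1\<^sub>m n" using a K_iff by auto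
  have ig: "inv g \<in> carrier G" using g by simp
  have ga: "g \<otimes> a \<in> carrier G" using g aG by simp
  have "\<rho> (g \<otimes> a) = (1 / \<alpha> g a) \<cdot>\<^sub>m (c \<cdot>\<^sub>m \<rho> g)"
    using rprod[OF g aG] c mult_smult_one[OF car[OF g]] by simp
  hence e1: "\<rho> (g \<otimes> a) = (c / \<alpha> g a) \<cdot>\<^sub>m \<rho> g" by (simp add: smult_smult_mat)
  have "\<rho> (g \<otimes> a \<otimes> inv g) = (1 / \<alpha> (g \<otimes> a) (inv g)) \<cdot>\<^sub>m (((c / \<alpha> g a) \<cdot>\<^sub>m \<rho> g) * \<rho> (inv g))"
    using rprod[OF ga ig] e1 by simp
  also have "\<dots> = (1 / \<alpha> (g \<otimes> a) (inv g)) \<cdot>\<^sub>m ((c / \<alpha> g a) \<cdot>\<^sub>m (\<rho> g * \<rho> (inv g)))"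
    using mult_smult_assoc_mat[OF car[OF g] car[OF ig]] by simp
  also have "\<dots> = (1 / \<alpha> (g \<otimes> a) (inv g)) \<cdot>\<^sub>m ((c / \<alpha> g a) \<cdot>\<^sub>m (\<alpha> g (inv g) \<cdot>\<^sub>m 1\<^sub>m n))"
    using rmult[OF g ig] g rone by simp
  also have "\<dots> = (c * \<alpha> g (inv g) / (\<alpha> (g \<otimes> a) (inv g) * \<alpha> g a)) \<cdot>\<^sub>m 1\<^sub>m n"
    by (simp add: smult_smult_mat)
  finally have "\<rho> (g \<otimes> a \<otimes> inv g) = (c * \<alpha> g (inv g) / (\<alpha> (g \<otimes> a) (inv g) * \<alpha> g a)) \<cdot>\<^sub>m 1\<^sub>m n" .
  moreover have "c * \<alpha> g (inv g) / (\<alpha> (g \<otimes> a) (inv g) * \<alpha> g a) \<noteq> 0"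
    using c(1) alpha_nz[OF g ig] alpha_nz[OF g aG] alpha_nz[OF ga ig] by simp
  moreover have "g \<otimes> a \<otimes> inv g \<in> carrier G" using ga ig by simp
  ultimately show ?thesis unfolding K_iff by blast
qed

end


context crep begin

lemma infl:
  assumes N: "central_subgroup N G" and NK: "N \<subseteq> K"
  shows "in_inflation_image G N \<alpha>"
proof -
  have Nsub: "subgroup N G" and cent: "\<And>h g. h \<in> N \<Longrightarrow> g \<in> carrier G \<Longrightarrow> h \<otimes> g = g \<otimes> h"
    using N unfolding central_subgroup_def by auto
  have NG: "N \<subseteq> carrier G" using Nsub subgroup.subset by blast
  have Nn: "N \<lhd> G"
    unfolding normal_inv_iff
  proof (intro conjI ballI Nsub)
    fix x h assume x: "x \<in> carrier G" and h: "h \<in> N"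
    have hG: "h \<in> carrier G" using h NG by auto
    have "x \<otimes> h \<otimes> inv x = h \<otimes> x \<otimes> inv x" using cent[OF h x] by simp
    also have "\<dots> = h" using hG x by (simp add: m_assoc)
    finally show "x \<otimes> h \<otimes> inv x \<in> N" using h by simp
  qed
  interpret Nn: normal N G by (rule Nn)
  have propN: "\<exists>c. c \<noteq> 0 \<and> \<rho> y = c \<cdot>\<^sub>m \<rho> x" if x: "x \<in> carrier G" and y: "y \<in> N #> x" for x y
  proof -
    obtain h where h: "h \<in> N" and yh: "y = h \<otimes> x" using y unfolding r_coset_def by auto
    have hG: "h \<in> carrier G" using h NG by auto
    obtain d where d: "d \<noteq> 0" "\<rho> h = d \<cdot>\<^sub>m 1\<^sub>m n" using NK h K_iff by blast
    have "\<rho> y = (1 / \<alpha> h x) \<cdot>\<^sub>m (d \<cdot>\<^sub>m \<rho> x)"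
      using rprod[OF hG x] yh d smult_one_mult[OF car[OF x]] by simp
    also have "\<dots> = (d / \<alpha> h x) \<cdot>\<^sub>m \<rho> x" by (simp add: smult_smult_mat)
    finally have "\<rho> y = (d / \<alpha> h x) \<cdot>\<^sub>m \<rho> x" .
    moreover have "d / \<alpha> h x \<noteq> 0" using d(1) alpha_nz[OF hG x] by simp
    ultimately show ?thesis by blast
  qed
  define r where "r C = (SOME x. x \<in> C)" for C :: "'a set"
  have rN: "r (N #> x) \<in> N #> x" if x: "x \<in> carrier G" for x
    unfolding r_def by (rule someI[of _ x]) (rule rcos_self[OF x Nsub])
  have rG: "r (N #> x) \<in> carrier G" if x: "x \<in> carrier G" for x
    using rN[OF x] x NG unfolding r_coset_def by auto
  define \<mu> where "\<mu> x = (SOME c. c \<noteq> 0 \<and> \<rho> (r (N #> x)) = c \<cdot>\<^sub>m \<rho> x)" for x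
  have \<mu>: "\<mu> x \<noteq> 0 \<and> \<rho> (r (N #> x)) = \<mu> x \<cdot>\<^sub>m \<rho> x" if x: "x \<in> carrier G" for x
  proof -
    obtain c where "c \<noteq> 0 \<and> \<rho> (r (N #> x)) = c \<cdot>\<^sub>m \<rho> x" using propN[OF x rN[OF x]] by blast
    thus ?thesis unfolding \<mu>_def by (rule someI)
  qed
  define \<beta> where "\<beta> C D = (SOME c. c \<noteq> 0 \<and> \<rho> (r C) * \<rho> (r D) = c \<cdot>\<^sub>m \<rho> (r (C <#> D)))" for C D
  have \<beta>val: "\<beta> (N #> x) (N #> y) * \<mu> (x \<otimes> y) = \<mu> x * \<mu> y * \<alpha> x y"
    and \<beta>nz: "\<beta> (N #> x) (N #> y) \<noteq> 0"
    if x: "x \<in> carrier G" and y: "y \<in> carrier G" for x y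
  proof -
    have xy: "x \<otimes> y \<in> carrier G" using x y by simp
    have prod: "\<rho> (r (N #> x)) * \<rho> (r (N #> y)) = (\<mu> x * \<mu> y * \<alpha> x y) \<cdot>\<^sub>m \<rho> (x \<otimes> y)"
    proof -
      have "\<rho> (r (N #> x)) * \<rho> (r (N #> y)) = (\<mu> x * \<mu> y) \<cdot>\<^sub>m (\<rho> x * \<rho> y)"
        using \<mu>[OF x] \<mu>[OF y] smult_mult_smult[OF car[OF x] car[OF y]] by simp
      also have "\<dots> = (\<mu> x * \<mu> y * \<alpha> x y) \<cdot>\<^sub>m \<rho> (x \<otimes> y)"
        using rmult[OF x y] by (simp add: smult_smult_mat)
      finally show ?thesis .
    qed
    have cs: "(N #> x) <#> (N #> y) = N #> (x \<otimes> y)" using Nn.rcos_sum[OF x y] .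
    define c where "c = \<mu> x * \<mu> y * \<alpha> x y / \<mu> (x \<otimes> y)"
    have cnz: "c \<noteq> 0" unfolding c_def using \<mu>[OF x] \<mu>[OF y] \<mu>[OF xy] alpha_nz[OF x y] by simp
    have "c \<cdot>\<^sub>m \<rho> (r ((N #> x) <#> (N #> y))) = (c * \<mu> (x \<otimes> y)) \<cdot>\<^sub>m \<rho> (x \<otimes> y)"
      unfolding cs using \<mu>[OF xy] by (simp add: smult_smult_mat)
    also have "c * \<mu> (x \<otimes> y) = \<mu> x * \<mu> y * \<alpha> x y" unfolding c_def using \<mu>[OF xy] by simp
    finally have ceq: "\<rho> (r (N #> x)) * \<rho> (r (N #> y)) = c \<cdot>\<^sub>m \<rho> (r ((N #> x) <#> (N #> y)))"
      using prod by simp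
    have spec: "\<beta> (N #> x) (N #> y) \<noteq> 0 \<and> \<rho> (r (N #> x)) * \<rho> (r (N #> y)) = \<beta> (N #> x) (N #> y) \<cdot>\<^sub>m \<rho> (r ((N #> x) <#> (N #> y)))"
      unfolding \<beta>_def by (rule someI[of _ c]) (use cnz ceq in simp)
    show "\<beta> (N #> x) (N #> y) \<noteq> 0" using spec by simp
    have "(\<beta> (N #> x) (N #> y) * \<mu> (x \<otimes> y)) \<cdot>\<^sub>m \<rho> (x \<otimes> y) = (\<mu> x * \<mu> y * \<alpha> x y) \<cdot>\<^sub>m \<rho> (x \<otimes> y)"
      using spec prod cs \<mu>[OF xy] by (simp add: smult_smult_mat)
    thus "\<beta> (N #> x) (N #> y) * \<mu> (x \<otimes> y) = \<mu> x * \<mu> y * \<alpha> x y" using rcancel[OF xy] by blast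
  qed
  have \<beta>form: "\<beta> (N #> x) (N #> y) = \<mu> x * \<mu> y * \<alpha> x y / \<mu> (x \<otimes> y)"
    if x: "x \<in> carrier G" and y: "y \<in> carrier G" for x y
    using \<beta>val[OF x y] \<mu>[of "x \<otimes> y"] x y by (simp add: field_simps)
  have carQ: "\<exists>a\<in>carrier G. C = N #> a" if "C \<in> carrier (G Mod N)" for C
    using that unfolding FactGroup_def RCOSETS_def by auto
  have coc2: "cocycle2 (G Mod N) \<beta>"
    unfolding cocycle2_def
  proof (intro conjI ballI)
    fix C D assume C: "C \<in> carrier (G Mod N)" and D: "D \<in> carrier (G Mod N)"
    obtain a b where a: "a \<in> carrier G" "C = N #> a" and b: "b \<in> carrier G" "D = N #> b"
      using carQ[OF C] carQ[OF D] by blast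
    show "\<beta> C D \<noteq> 0" using \<beta>nz[OF a(1) b(1)] a b by simp
  next
    fix C D E assume C: "C \<in> carrier (G Mod N)" and D: "D \<in> carrier (G Mod N)" and E: "E \<in> carrier (G Mod N)"
    obtain a b c where a: "a \<in> carrier G" "C = N #> a" and b: "b \<in> carrier G" "D = N #> b"
      and c: "c \<in> carrier G" "E = N #> c"
      using carQ[OF C] carQ[OF D] carQ[OF E] by blast
    have ab: "a \<otimes> b \<in> carrier G" and bc: "b \<otimes> c \<in> carrier G" using a b c by auto
    have e1: "C \<otimes>\<^bsub>G Mod N\<^esub> D = N #> (a \<otimes> b)" using a b Nn.rcos_sum by simp
    have e2: "D \<otimes>\<^bsub>G Mod N\<^esub> E = N #> (b \<otimes> c)" using b c Nn.rcos_sum by simp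
    have abc: "a \<otimes> b \<otimes> c = a \<otimes> (b \<otimes> c)" using a b c by (simp add: m_assoc)
    have m0: "\<mu> a \<noteq> 0" "\<mu> b \<noteq> 0" "\<mu> c \<noteq> 0" "\<mu> (a \<otimes> b) \<noteq> 0" "\<mu> (b \<otimes> c) \<noteq> 0"
      using \<mu> a b c ab bc by auto
    have "\<beta> C D * \<beta> (C \<otimes>\<^bsub>G Mod N\<^esub> D) E
        = (\<mu> a * \<mu> b * \<alpha> a b / \<mu> (a \<otimes> b)) * (\<mu> (a \<otimes> b) * \<mu> c * \<alpha> (a \<otimes> b) c / \<mu> (a \<otimes> b \<otimes> c))"
      unfolding e1 using \<beta>form a b c ab by simp
    also have "\<dots> = \<mu> a * \<mu> b * \<mu> c * (\<alpha> a b * \<alpha> (a \<otimes> b) c) / \<mu> (a \<otimes> (b \<otimes> c))"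
      using m0 abc by (simp add: field_simps)
    also have "\<dots> = \<mu> a * \<mu> b * \<mu> c * (\<alpha> a (b \<otimes> c) * \<alpha> b c) / \<mu> (a \<otimes> (b \<otimes> c))"
      using alpha_assoc[OF a(1) b(1) c(1)] by simp
    also have "\<dots> = (\<mu> a * \<mu> (b \<otimes> c) * \<alpha> a (b \<otimes> c) / \<mu> (a \<otimes> (b \<otimes> c))) * (\<mu> b * \<mu> c * \<alpha> b c / \<mu> (b \<otimes> c))"
      using m0 by (simp add: field_simps)
    also have "\<dots> = \<beta> C (D \<otimes>\<^bsub>G Mod N\<^esub> E) * \<beta> D E"
      unfolding e2 using \<beta>form a b c bc by simp
    finally show "\<beta> C D * \<beta> (C \<otimes>\<^bsub>G Mod N\<^esub> D) E = \<beta> C (D \<otimes>\<^bsub>G Mod N\<^esub> E) * \<beta> D E" .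
  qed
  have coh: "cohomologous G \<alpha> (inflation G N \<beta>)"
    unfolding cohomologous_def inflation_def
  proof (intro exI[of _ "\<lambda>x. 1 / \<mu> x"] conjI ballI)
    fix x assume "x \<in> carrier G" thus "1 / \<mu> x \<noteq> 0" using \<mu> by simp
  next
    fix x y assume x: "x \<in> carrier G" and y: "y \<in> carrier G"
    have xy: "x \<otimes> y \<in> carrier G" using x y by simp
    show "\<alpha> x y = 1 / \<mu> x * (1 / \<mu> y) / (1 / \<mu> (x \<otimes> y)) * \<beta> (N #> x) (N #> y)"
      unfolding \<beta>form[OF x y] using \<mu>[OF x] \<mu>[OF y] \<mu>[OF xy] by (simp add: field_simps)
  qed
  show ?thesis unfolding in_inflation_image_def using coc2 coh by blast
qed

end


lemma exists_eigen:
  fixes A :: "complex mat"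
  assumes A: "A \<in> carrier_mat n n" and n: "0 < n"
  shows "\<exists>a v. v \<in> carrier_vec n \<and> v \<noteq> 0\<^sub>v n \<and> A *\<^sub>v v = a \<cdot>\<^sub>v v"
proof -
  obtain as where cp: "char_poly A = (\<Prod>a\<leftarrow>as. [:- a, 1:])" and len: "length as = n"
    using char_poly_factorized[OF A] by blast
  define a where "a = as ! 0"
  have aas: "a \<in> set as" unfolding a_def using len n by simp
  have "poly (char_poly A) a = (\<Prod>b\<leftarrow>as. poly [:- b, 1:] a)"
    unfolding cp by (simp add: poly_prod_list o_def)
  also have "\<dots> = 0" unfolding prod_list_zero_iff using aas by force
  finally have "eigenvalue A a" using eigenvalue_root_char_poly[OF A] by simp
  then obtain v where "eigenvector A v a" unfolding eigenvalue_def by blast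
  thus ?thesis unfolding eigenvector_def using A by auto
qed

context crep begin

lemma schur_scalar:
  assumes irr: "irreducible_rep G n \<rho>" and z: "z \<in> carrier G"
    and comm: "\<And>g. g \<in> carrier G \<Longrightarrow> \<rho> g * \<rho> z = \<rho> z * \<rho> g"
  shows "\<exists>c. c \<noteq> 0 \<and> \<rho> z = c \<cdot>\<^sub>m 1\<^sub>m n"
proof -
  let ?A = "\<rho> z"
  have A: "?A \<in> carrier_mat n n" using car[OF z] .
  obtain a v where v: "v \<in> carrier_vec n" "v \<noteq> 0\<^sub>v n" "?A *\<^sub>v v = a \<cdot>\<^sub>v v"
    using exists_eigen[OF A npos] by blast
  define W where "W = {w \<in> carrier_vec n. ?A *\<^sub>v w = a \<cdot>\<^sub>v w}"
  have "invariant_subspace G n \<rho> W"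
    unfolding invariant_subspace_def
  proof (intro conjI ballI allI)
    show "W \<subseteq> carrier_vec n" unfolding W_def by auto
    have "?A *\<^sub>v 0\<^sub>v n = a \<cdot>\<^sub>v 0\<^sub>v n"
      by (rule eq_vecI) (use A in \<open>simp_all add: scalar_prod_def\<close>)
    thus "0\<^sub>v n \<in> W" unfolding W_def by simp
  next
    fix v w assume v: "v \<in> W" and w: "w \<in> W"
    have vc: "v \<in> carrier_vec n" and wc: "w \<in> carrier_vec n" using v w unfolding W_def by auto
    have "?A *\<^sub>v (v + w) = ?A *\<^sub>v v + ?A *\<^sub>v w" using mult_add_distrib_mat_vec[OF A vc wc] .
    also have "\<dots> = a \<cdot>\<^sub>v v + a \<cdot>\<^sub>v w" using v w unfolding W_def by simp
    also have "\<dots> = a \<cdot>\<^sub>v (v + w)" using smult_add_distrib_vec[OF vc wc] by simp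
    finally show "v + w \<in> W" unfolding W_def using vc wc by simp
  next
    fix c v assume v: "v \<in> W"
    have vc: "v \<in> carrier_vec n" using v unfolding W_def by auto
    have "?A *\<^sub>v (c \<cdot>\<^sub>v v) = c \<cdot>\<^sub>v (?A *\<^sub>v v)" using mult_mat_vec[OF A vc] .
    also have "\<dots> = c \<cdot>\<^sub>v (a \<cdot>\<^sub>v v)" using v unfolding W_def by simp
    also have "\<dots> = a \<cdot>\<^sub>v (c \<cdot>\<^sub>v v)" by (simp add: smult_smult_assoc mult.commute)
    finally show "c \<cdot>\<^sub>v v \<in> W" unfolding W_def using vc by simp
  next
    fix g v assume g: "g \<in> carrier G" and v: "v \<in> W"
    have vc: "v \<in> carrier_vec n" using v unfolding W_def by auto
    have "?A *\<^sub>v (\<rho> g *\<^sub>v v) = (?A * \<rho> g) *\<^sub>v v" using A car[OF g] vc by simp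
    also have "\<dots> = (\<rho> g * ?A) *\<^sub>v v" using comm[OF g] by simp
    also have "\<dots> = \<rho> g *\<^sub>v (?A *\<^sub>v v)" using A car[OF g] vc by simp
    also have "\<dots> = \<rho> g *\<^sub>v (a \<cdot>\<^sub>v v)" using v unfolding W_def by simp
    also have "\<dots> = a \<cdot>\<^sub>v (\<rho> g *\<^sub>v v)" using mult_mat_vec[OF car[OF g] vc] .
    finally show "\<rho> g *\<^sub>v v \<in> W" unfolding W_def using vc car[OF g] by simp
  qed
  hence "W = {0\<^sub>v n} \<or> W = carrier_vec n" using irr unfolding irreducible_rep_def by blast
  moreover have "v \<in> W" unfolding W_def using v by simp
  ultimately have Wall: "W = carrier_vec n" using v(2) by blast
  have Aeq: "?A = a \<cdot>\<^sub>m 1\<^sub>m n"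
  proof (rule eq_matI)
    fix i j assume "i < dim_row (a \<cdot>\<^sub>m 1\<^sub>m n)" "j < dim_col (a \<cdot>\<^sub>m 1\<^sub>m n)"
    hence i: "i < n" and j: "j < n" by auto
    have "unit_vec n j \<in> W" using Wall by simp
    hence "?A *\<^sub>v unit_vec n j = a \<cdot>\<^sub>v unit_vec n j" unfolding W_def by simp
    hence "col ?A j = a \<cdot>\<^sub>v unit_vec n j" using mult_unit_vec_col[OF A j] by simp
    hence "col ?A j $ i = (a \<cdot>\<^sub>v unit_vec n j) $ i" by simp
    thus "?A $$ (i, j) = (a \<cdot>\<^sub>m 1\<^sub>m n) $$ (i, j)" using i j A by simp
  qed (use A in auto)
  have "a \<noteq> 0"
  proof
    assume a0: "a = 0"
    obtain i j where ij: "i < n" "j < n" "?A $$ (i,j) \<noteq> 0" using mat_nonzero_entry[OF A invt[OF z] npos] by blast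
    thus False using Aeq a0 by simp
  qed
  thus ?thesis using Aeq by blast
qed

end


context crep begin

lemma forward:
  assumes irr: "irreducible_rep G n \<rho>" and faith: "faithful_rep G n \<rho>"
    and N: "central_subgroup N G" and Nnt: "N \<noteq> {\<one>}" and inf: "in_inflation_image G N \<alpha>"
  shows False
proof -
  have Nsub: "subgroup N G" and cent: "\<And>h g. h \<in> N \<Longrightarrow> g \<in> carrier G \<Longrightarrow> h \<otimes> g = g \<otimes> h"
    using N unfolding central_subgroup_def by auto
  have NG: "N \<subseteq> carrier G" using Nsub subgroup.subset by blast
  have Nn: "N \<lhd> G"
    unfolding normal_inv_iff
  proof (intro conjI ballI Nsub)
    fix x h assume x: "x \<in> carrier G" and h: "h \<in> N"
    have hG: "h \<in> carrier G" using h NG by auto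
    have "x \<otimes> h \<otimes> inv x = h \<otimes> x \<otimes> inv x" using cent[OF h x] by simp
    also have "\<dots> = h" using hG x by (simp add: m_assoc)
    finally show "x \<otimes> h \<otimes> inv x \<in> N" using h by simp
  qed
  interpret Nn: normal N G by (rule Nn)
  obtain \<beta> \<mu> where \<beta>: "cocycle2 (G Mod N) \<beta>" and \<mu>nz: "\<And>x. x \<in> carrier G \<Longrightarrow> \<mu> x \<noteq> 0"
    and \<alpha>eq: "\<And>x y. x \<in> carrier G \<Longrightarrow> y \<in> carrier G \<Longrightarrow>
        \<alpha> x y = \<mu> x * \<mu> y / \<mu> (x \<otimes> y) * \<beta> (N #> x) (N #> y)"
    using inf unfolding in_inflation_image_def cohomologous_def inflation_def by blast
  have oneN: "\<one> \<in> N" using Nsub subgroup.one_closed by blast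
  obtain z where zN: "z \<in> N" and z1: "z \<noteq> \<one>" using Nnt oneN by blast
  have zG: "z \<in> carrier G" using zN NG by auto
  have Nz: "N #> z = N" using coset_join2[OF zG Nsub zN] .
  have N1: "N #> \<one> = N" using NG by simp
  have inQ: "N #> x \<in> carrier (G Mod N)" if "x \<in> carrier G" for x
    unfolding FactGroup_def using rcosetsI[OF NG that] by simp
  have \<beta>nz: "\<And>C D. C \<in> carrier (G Mod N) \<Longrightarrow> D \<in> carrier (G Mod N) \<Longrightarrow> \<beta> C D \<noteq> 0"
    using \<beta> unfolding cocycle2_def by blast
  have \<beta>as: "\<And>C D E. C \<in> carrier (G Mod N) \<Longrightarrow> D \<in> carrier (G Mod N) \<Longrightarrow> E \<in> carrier (G Mod N) \<Longrightarrow>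
      \<beta> C D * \<beta> (C <#> D) E = \<beta> C (D <#> E) * \<beta> D E"
    using \<beta> unfolding cocycle2_def by simp
  have \<beta>sym: "\<beta> N (N #> g) = \<beta> (N #> g) N" if g: "g \<in> carrier G" for g
  proof -
    have q1: "N \<in> carrier (G Mod N)" using inQ[of \<one>] N1 by simp
    have qg: "N #> g \<in> carrier (G Mod N)" using inQ[OF g] .
    have NN: "N <#> N = N" using Nn.rcos_sum[of \<one> \<one>] N1 by simp
    have Ng: "N <#> (N #> g) = N #> g" using Nn.rcos_sum[of \<one> g] N1 g by simp
    have gN: "(N #> g) <#> N = N #> g" using Nn.rcos_sum[of g \<one>] N1 g by simp
    have "\<beta> N N * \<beta> N (N #> g) = \<beta> N (N #> g) * \<beta> N (N #> g)"
      using \<beta>as[OF q1 q1 qg] NN Ng by simp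
    hence l: "\<beta> N (N #> g) = \<beta> N N" using \<beta>nz[OF q1 qg] by simp
    have "\<beta> (N #> g) N * \<beta> (N #> g) N = \<beta> (N #> g) N * \<beta> N N"
      using \<beta>as[OF qg q1 q1] NN gN by simp
    hence r: "\<beta> (N #> g) N = \<beta> N N" using \<beta>nz[OF qg q1] by simp
    show ?thesis using l r by simp
  qed
  have comm: "\<rho> g * \<rho> z = \<rho> z * \<rho> g" if g: "g \<in> carrier G" for g
  proof -
    have zg: "z \<otimes> g = g \<otimes> z" using cent[OF zN g] .
    have "\<alpha> z g = \<alpha> g z"
      using \<alpha>eq[OF zG g] \<alpha>eq[OF g zG] zg Nz \<beta>sym[OF g] by (simp add: mult.commute)
    thus ?thesis using rmult[OF g zG] rmult[OF zG g] zg by simp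
  qed
  obtain c where "c \<noteq> 0" "\<rho> z = c \<cdot>\<^sub>m 1\<^sub>m n" using schur_scalar[OF irr zG comm] by blast
  hence "z \<in> K" using K_iff zG by blast
  thus False using faith z1 unfolding faithful_rep_def by simp
qed

end


lemma (in group) center_subgroup: "subgroup {x \<in> carrier G. \<forall>g\<in>carrier G. x \<otimes> g = g \<otimes> x} G"
proof (rule subgroupI)
  show "{x \<in> carrier G. \<forall>g\<in>carrier G. x \<otimes> g = g \<otimes> x} \<subseteq> carrier G" by auto
  show "{x \<in> carrier G. \<forall>g\<in>carrier G. x \<otimes> g = g \<otimes> x} \<noteq> {}" by (auto intro!: exI[of _ \<one>])
next
  fix a assume a: "a \<in> {x \<in> carrier G. \<forall>g\<in>carrier G. x \<otimes> g = g \<otimes> x}"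
  hence aG: "a \<in> carrier G" and ac: "\<And>g. g \<in> carrier G \<Longrightarrow> a \<otimes> g = g \<otimes> a" by auto
  have "inv a \<otimes> g = g \<otimes> inv a" if g: "g \<in> carrier G" for g
  proof -
    have "a \<otimes> inv g = inv g \<otimes> a" using ac g by simp
    hence "inv (a \<otimes> inv g) = inv (inv g \<otimes> a)" by simp
    thus ?thesis using aG g by (simp add: inv_mult_group)
  qed
  thus "inv a \<in> {x \<in> carrier G. \<forall>g\<in>carrier G. x \<otimes> g = g \<otimes> x}" using aG by auto
next
  fix a b assume a: "a \<in> {x \<in> carrier G. \<forall>g\<in>carrier G. x \<otimes> g = g \<otimes> x}"
    and b: "b \<in> {x \<in> carrier G. \<forall>g\<in>carrier G. x \<otimes> g = g \<otimes> x}"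
  hence aG: "a \<in> carrier G" and ac: "\<And>g. g \<in> carrier G \<Longrightarrow> a \<otimes> g = g \<otimes> a"
    and bG: "b \<in> carrier G" and bc: "\<And>g. g \<in> carrier G \<Longrightarrow> b \<otimes> g = g \<otimes> b" by auto
  have "a \<otimes> b \<otimes> g = g \<otimes> (a \<otimes> b)" if g: "g \<in> carrier G" for g
  proof -
    have "a \<otimes> b \<otimes> g = a \<otimes> (g \<otimes> b)" using aG bG g bc[OF g] by (simp add: m_assoc)
    also have "\<dots> = (a \<otimes> g) \<otimes> b" using aG bG g by (simp add: m_assoc)
    also have "\<dots> = g \<otimes> (a \<otimes> b)" using aG bG g ac[OF g] by (simp add: m_assoc)
    finally show ?thesis .
  qed
  thus "a \<otimes> b \<in> {x \<in> carrier G. \<forall>g\<in>carrier G. x \<otimes> g = g \<otimes> x}" using aG bG by auto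
qed

theorem theorem3p1:
  fixes G :: "('a, 'b) monoid_scheme" and p :: nat and \<alpha> :: "'a \<Rightarrow> 'a \<Rightarrow> complex"
  assumes "p_group p G"
    and "cocycle2 G \<alpha>"
    and "\<alpha> \<one>\<^bsub>G\<^esub> \<one>\<^bsub>G\<^esub> = 1"
  shows "(\<exists>n \<rho>. alpha_rep G \<alpha> n \<rho> \<and> irreducible_rep G n \<rho> \<and> faithful_rep G n \<rho>) \<longleftrightarrow>
         (\<forall>N. central_subgroup N G \<and> N \<noteq> {\<one>\<^bsub>G\<^esub>} \<longrightarrow> \<not> in_inflation_image G N \<alpha>)"
proof -
  have grp: "group G" and pr: "prime p" and fin: "finite (carrier G)" and ord: "\<exists>k. Coset.order G = p ^ k"
    using assms(1) unfolding p_group_def by auto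
  obtain e where e: "Coset.order G = p ^ e" using ord by blast
  interpret coc G \<alpha> using grp assms(2,3) by (simp add: coc_def coc_axioms_def)
  show ?thesis
  proof
    assume "\<exists>n \<rho>. alpha_rep G \<alpha> n \<rho> \<and> irreducible_rep G n \<rho> \<and> faithful_rep G n \<rho>"
    then obtain n \<rho> where r: "alpha_rep G \<alpha> n \<rho>" and irr: "irreducible_rep G n \<rho>" and f: "faithful_rep G n \<rho>"
      by blast
    have n: "0 < n" using irr unfolding irreducible_rep_def by simp
    interpret crep G \<alpha> n \<rho> using r n by unfold_locales
    show "\<forall>N. central_subgroup N G \<and> N \<noteq> {\<one>\<^bsub>G\<^esub>} \<longrightarrow> \<not> in_inflation_image G N \<alpha>"
      using forward[OF irr f] by blast
  next
    assume H: "\<forall>N. central_subgroup N G \<and> N \<noteq> {\<one>\<^bsub>G\<^esub>} \<longrightarrow> \<not> in_inflation_image G N \<alpha>"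
    obtain n \<rho> where r: "alpha_rep G \<alpha> n \<rho>" and irr: "irreducible_rep G n \<rho>"
      using exists_irred[OF fin] by blast
    have n: "0 < n" using irr unfolding irreducible_rep_def by simp
    interpret crep G \<alpha> n \<rho> using r n by unfold_locales
    have "K = {\<one>\<^bsub>G\<^esub>}"
    proof (rule ccontr)
      assume nt: "K \<noteq> {\<one>\<^bsub>G\<^esub>}"
      obtain z where zK: "z \<in> K" and z1: "z \<noteq> \<one>\<^bsub>G\<^esub>" and zc: "\<forall>g\<in>carrier G. z \<otimes>\<^bsub>G\<^esub> g = g \<otimes>\<^bsub>G\<^esub> z"
        using normal_meets_center[OF fin e pr K_subgroup K_conj nt] by blast
      define Z where "Z = {x \<in> carrier G. \<forall>g\<in>carrier G. x \<otimes>\<^bsub>G\<^esub> g = g \<otimes>\<^bsub>G\<^esub> x}"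
      define N where "N = K \<inter> Z"
      have "subgroup N G" unfolding N_def Z_def using subgroups_Inter_pair[OF K_subgroup center_subgroup] .
      moreover have "\<forall>h\<in>N. \<forall>g\<in>carrier G. h \<otimes>\<^bsub>G\<^esub> g = g \<otimes>\<^bsub>G\<^esub> h" unfolding N_def Z_def by auto
      ultimately have cN: "central_subgroup N G" unfolding central_subgroup_def by blast
      have zN: "z \<in> N" unfolding N_def Z_def using zK zc K_iff by auto
      have "N \<noteq> {\<one>\<^bsub>G\<^esub>}" using zN z1 by auto
      hence "\<not> in_inflation_image G N \<alpha>" using H cN by blast
      moreover have "in_inflation_image G N \<alpha>" using infl[OF cN] unfolding N_def by blast
      ultimately show False by contradiction
    qed
    hence "faithful_rep G n \<rho>" unfolding faithful_rep_def by simp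
    thus "\<exists>n \<rho>. alpha_rep G \<alpha> n \<rho> \<and> irreducible_rep G n \<rho> \<and> faithful_rep G n \<rho>" using r irr by blast
  qed
qed

end
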